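(* Let $\varepsilon\in[0,1)$ and $\mathcal{P},\mathcal{E}\subseteq\mathcal{D}(P)$. Then $$\beta\overline{C}_{\mathrm{GPO},\varepsilon}(\mathcal{P},\mathcal{E})=D^{\mathcal{E}}_{\max,\varepsilon}(\mathcal{P}\|\mathcal{E}).$$
   Context: All Hilbert spaces are finite-dimensional; $\mathcal{D}(P)$ is the set of density operators on $P$; $T(X,Y)=\tfrac12\|X-Y\|_1$; $\mathcal{B}_\varepsilon(\mathcal{P})=\{\omega\in\mathcal{D}:T(\omega,\rho)\le\varepsilon\text{ for some }\rho\in\mathcal{P}\}$. Battery: qubit $B$ with basis $\{|0\rangle,|1\rangle\}$, $\pi_M=(1-\tfrac1M)|0\rangle\langle0|+\tfrac1M|1\rangle\langle1|$ for $M>1$, $\Pi_M=\{\pi_{M'}:M'\in[M,\infty)\}$. The one-shot work cost from a dirty battery under a class $\mathfrak{F}$ is $\beta\overline{C}_{\mathfrak{F},\varepsilon}(\mathcal{P},\mathcal{E})=\log\inf\{M>1:\exists\mathcal{F}\in\mathfrak{F}\text{ with } T(\mathcal{F}(|1\rangle\langle1|),\rho)\le\varepsilon\text{ for some }\rho\in\mathcal{P}\text{ and }\mathcal{F}(\sigma)\in\mathcal{E}\ \forall\sigma\in\Pi_M\}$; GPO here means the class of CPTP maps from $B$ to $P$, Gibbs preservation being the condition $\mathcal{F}(\Pi_M)\subseteq\mathcal{E}$. For $\mathcal{K}\subseteq\mathcal{D}$, with $\operatorname{cl}(\mathcal{K})$ its closure and $\mathcal{C}(\gamma,\omega,1/M)=\{(1-\lambda)\gamma+\lambda\omega:\lambda\in(0,1/M]\}$,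 the subspace-constrained max-relative entropy is $D^{\mathcal{K}}_{\max,\varepsilon}(\mathcal{P}\|\mathcal{E})=\log\inf\{M>1:\gamma\in\operatorname{cl}(\mathcal{K}),\ \omega\in\mathcal{B}_\varepsilon(\mathcal{P}),\ \mathcal{C}(\gamma,\omega,1/M)\subseteq\mathcal{E}\}$ (with $\log\inf\emptyset=+\infty$). *)

theory Defs
  imports "Jordan_Normal_Form.Jordan_Normal_Form" "Jordan_Normal_Form.Schur_Decomposition" "HOL-Library.Extended_Real"
begin

definition mtrace :: "complex mat \<Rightarrow> complex" where
  "mtrace A = (\<Sum>i < dim_row A. A $$ (i, i))"

definition psd_mat :: "nat \<Rightarrow> complex mat \<Rightarrow> bool" where
  "psd_mat n A \<longleftrightarrow> A \<in> carrier_mat n n \<and> mat_adjoint A = A \<and>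
     (\<forall>v \<in> carrier_vec n. 0 \<le> Re (conjugate v \<bullet> (A *\<^sub>v v)))"

text \<open>Density operators D(P) on P = C^n.\<close>
definition density_ops :: "nat \<Rightarrow> complex mat set" where
  "density_ops n = {\<rho>. psd_mat n \<rho> \<and> mtrace \<rho> = 1}"

definition eigvals_list :: "complex mat \<Rightarrow> complex list" where
  "eigvals_list A = (SOME as. char_poly A = (\<Prod>a \<leftarrow> as. [:- a, 1:]))"

text \<open>Trace norm ||X||_1 = tr sqrt(X^* X) = sum of the square roots of the eigenvalues of X^* X.\<close>
definition trace_norm :: "complex mat \<Rightarrow> real" where
  "trace_norm X = sum_list (map (\<lambda>a. sqrt (Re a)) (eigvals_list (mat_adjoint X * X)))"

definition trace_dist :: "complex mat \<Rightarrow> complex mat \<Rightarrow> real" where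
  "trace_dist X Y = trace_norm (X - Y) / 2"

definition eps_ball :: "nat \<Rightarrow> real \<Rightarrow> complex mat set \<Rightarrow> complex mat set" where
  "eps_ball n \<epsilon> \<P> = {\<omega> \<in> density_ops n. \<exists>\<rho> \<in> \<P>. trace_dist \<omega> \<rho> \<le> \<epsilon>}"

text \<open>Closure of a set of n x n matrices (w.r.t. the trace norm; all norms are equivalent).\<close>
definition mat_closure :: "nat \<Rightarrow> complex mat set \<Rightarrow> complex mat set" where
  "mat_closure n K = {\<gamma> \<in> carrier_mat n n. \<forall>\<delta>>0. \<exists>\<kappa> \<in> K. trace_norm (\<gamma> - \<kappa>) < \<delta>}"

section \<open>Battery qubit B\<close>

definition ket1_proj :: "complex mat" where
  "ket1_proj = mat 2 2 (\<lambda>(i,j). if i = 1 \<and> j = 1 then 1 else 0)"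

definition pi_M :: "real \<Rightarrow> complex mat" where
  "pi_M M = mat 2 2 (\<lambda>(i,j). if i = 0 \<and> j = 0 then complex_of_real (1 - 1/M)
                        else if i = 1 \<and> j = 1 then complex_of_real (1/M) else 0)"

definition Pi_M :: "real \<Rightarrow> complex mat set" where
  "Pi_M M = {pi_M M' | M'. M' \<ge> M}"

text \<open>(id_k \<otimes> F) applied to a (2k) x (2k) block matrix X: block (i,j) becomes F(X_ij).\<close>
definition id_tensor :: "nat \<Rightarrow> nat \<Rightarrow> (complex mat \<Rightarrow> complex mat) \<Rightarrow> complex mat \<Rightarrow> complex mat" where
  "id_tensor n k F X = mat (k * n) (k * n) (\<lambda>(a,b).
      F (mat 2 2 (\<lambda>(r,c). X $$ (2 * (a div n) + r, 2 * (b div n) + c))) $$ (a mod n, b mod n))"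

definition CPTP_B :: "nat \<Rightarrow> (complex mat \<Rightarrow> complex mat) \<Rightarrow> bool" where
  "CPTP_B n F \<longleftrightarrow>
     (\<forall>X \<in> carrier_mat 2 2. F X \<in> carrier_mat n n) \<and>
     (\<forall>X \<in> carrier_mat 2 2. \<forall>Y \<in> carrier_mat 2 2. \<forall>a b :: complex.
         F (a \<cdot>\<^sub>m X + b \<cdot>\<^sub>m Y) = a \<cdot>\<^sub>m F X + b \<cdot>\<^sub>m F Y) \<and>
     (\<forall>X \<in> carrier_mat 2 2. mtrace (F X) = mtrace X) \<and>
     (\<forall>k X. psd_mat (2 * k) X \<longrightarrow> psd_mat (k * n) (id_tensor n k F X))"

definition log_inf :: "real set \<Rightarrow> ereal" where
  "log_inf S = (if S = {} then \<infinity> else ereal (log 2 (Inf S)))"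

definition work_cost_GPO :: "nat \<Rightarrow> real \<Rightarrow> complex mat set \<Rightarrow> complex mat set \<Rightarrow> ereal" where
  "work_cost_GPO n \<epsilon> \<P> \<E> = log_inf {M. M > 1 \<and> (\<exists>F. CPTP_B n F \<and>
      (\<exists>\<rho> \<in> \<P>. trace_dist (F ket1_proj) \<rho> \<le> \<epsilon>) \<and> (\<forall>\<sigma> \<in> Pi_M M. F \<sigma> \<in> \<E>))}"

definition segment_C :: "complex mat \<Rightarrow> complex mat \<Rightarrow> real \<Rightarrow> complex mat set" where
  "segment_C \<gamma> \<omega> t = {complex_of_real (1 - l) \<cdot>\<^sub>m \<gamma> + complex_of_real l \<cdot>\<^sub>m \<omega> | l. 0 < l \<and> l \<le> t}"

definition Dmax_constr :: "nat \<Rightarrow> complex mat set \<Rightarrow> real \<Rightarrow> complex mat set \<Rightarrow> complex mat set \<Rightarrow> ereal" where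
  "Dmax_constr n K \<epsilon> \<P> \<E> = log_inf {M. M > 1 \<and> (\<exists>\<gamma> \<in> mat_closure n K. \<exists>\<omega> \<in> eps_ball n \<epsilon> \<P>.
      segment_C \<gamma> \<omega> (1 / M) \<subseteq> \<E>)}"

end

theory Submission
  imports Defs "Jordan_Normal_Form.Jordan_Normal_Form_Existence"
begin
lemma adj_dims[simp]: "dim_row (mat_adjoint A) = dim_col A" "dim_col (mat_adjoint A) = dim_row A"
  unfolding mat_adjoint_def by auto
lemma adj_index[simp]: "i < dim_col A \<Longrightarrow> j < dim_row A \<Longrightarrow> mat_adjoint A $$ (i,j) = cnj (A $$ (j,i))"
  unfolding mat_adjoint_def by (simp add: mat_of_rows_def)
thm order_linear_power order_linear_power' order_mult
lemma order_prod_lin: "Polynomial.order x (\<Prod>a\<leftarrow>as. [:- a, 1:]) = count (mset as) (x::complex)"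
proof (induct as)
  case Nil then show ?case by (simp add: order_1)
next
  case (Cons b as)
  have "Polynomial.order x ((\<Prod>a\<leftarrow>b#as. [:- a, 1:])) = Polynomial.order x [:-b,1:] + Polynomial.order x (\<Prod>a\<leftarrow>as. [:- a, 1:])"
  proof -
    have nz: "(\<Prod>a\<leftarrow>as. [:- a, (1::complex):]) \<noteq> 0" by (auto simp: prod_list_zero_iff)
    have "[:-b,1:] * (\<Prod>a\<leftarrow>as. [:- a, (1::complex):]) \<noteq> 0" using nz by (intro no_zero_divisors) auto
    then show ?thesis unfolding list.map prod_list.Cons by (rule order_mult)
  qed
  then show ?case using Cons by (simp add: order_linear')
qed

lemma eigvals_prop: "A \<in> carrier_mat n n \<Longrightarrow> char_poly A = (\<Prod>a\<leftarrow>eigvals_list A. [:-a,1:])"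
proof -
  assume A: "A \<in> carrier_mat n n"
  from char_poly_factorized[OF A] obtain as where "char_poly A = (\<Prod>a\<leftarrow>as. [:-a,1:])" by blast
  then show ?thesis unfolding eigvals_list_def by (rule someI)
qed

lemma eigvals_smult: assumes A: "A \<in> carrier_mat n n" and k: "k \<noteq> 0"
  shows "mset (eigvals_list (k \<cdot>\<^sub>m A)) = image_mset ((*) k) (mset (eigvals_list A))"
proof (rule multiset_eqI)
  fix x
  have kA: "k \<cdot>\<^sub>m A \<in> carrier_mat n n" using A by simp
  have "count (mset (eigvals_list (k \<cdot>\<^sub>m A))) x = Polynomial.order x (char_poly (k \<cdot>\<^sub>m A))"
    using eigvals_prop[OF kA] order_prod_lin by simp
  also have "\<dots> = Polynomial.order (x/k) (char_poly A)" by (rule order_char_poly_smult[OF A k])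
  also have "\<dots> = count (mset (eigvals_list A)) (x/k)" using eigvals_prop[OF A] order_prod_lin by simp
  also have "\<dots> = count (image_mset ((*) k) (mset (eigvals_list A))) x"
  proof -
    have pre: "((*) k) -` {x} = {x/k}" using k by (auto simp: field_simps)
    show ?thesis unfolding count_image_mset pre
      by (cases "x/k \<in># mset (eigvals_list A)") (auto simp: Int_absorb2 not_in_iff)
  qed
  finally show "count (mset (eigvals_list (k \<cdot>\<^sub>m A))) x = count (image_mset ((*) k) (mset (eigvals_list A))) x" .
qed

lemma adj_smult: "mat_adjoint (c \<cdot>\<^sub>m Y) = cnj c \<cdot>\<^sub>m mat_adjoint (Y :: complex mat)"
  by (rule eq_matI) auto

lemma trace_norm_smult: assumes Y: "Y \<in> carrier_mat n n" and r: "r > 0"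
  shows "trace_norm (complex_of_real r \<cdot>\<^sub>m Y) = r * trace_norm Y"
proof -
  let ?c = "complex_of_real r"
  let ?B = "mat_adjoint Y * Y"
  have B: "?B \<in> carrier_mat n n" using Y by auto
  have eq: "mat_adjoint (?c \<cdot>\<^sub>m Y) * (?c \<cdot>\<^sub>m Y) = (?c * ?c) \<cdot>\<^sub>m ?B"
    using Y unfolding adj_smult 
    by (auto simp: mult_smult_assoc_mat mult_smult_distrib)
  have k: "?c * ?c \<noteq> 0" using r by simp
  have "trace_norm (?c \<cdot>\<^sub>m Y) = sum_mset (image_mset (\<lambda>a. sqrt (Re a)) (mset (eigvals_list ((?c * ?c) \<cdot>\<^sub>m ?B))))"
    unfolding trace_norm_def eq by (simp add: sum_mset_sum_list[symmetric])
  also have "\<dots> = sum_mset (image_mset (\<lambda>a. r * sqrt (Re a)) (mset (eigvals_list ?B)))"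
    unfolding eigvals_smult[OF B k] multiset.map_comp
    by (rule arg_cong[where f=sum_mset], rule image_mset_cong) (use r in \<open>auto simp: real_sqrt_mult\<close>)
  also have "\<dots> = r * sum_mset (image_mset (\<lambda>a. sqrt (Re a)) (mset (eigvals_list ?B)))"
    by (rule sum_mset_distrib_left[symmetric])
  also have "\<dots> = r * trace_norm Y"
    unfolding trace_norm_def by (simp add: sum_mset_sum_list[symmetric])
  finally show ?thesis .
qed

definition qf :: "nat \<Rightarrow> (nat \<Rightarrow> nat \<Rightarrow> complex) \<Rightarrow> (nat \<Rightarrow> complex) \<Rightarrow> complex" where
  "qf n g x = (\<Sum>i<n. \<Sum>j<n. cnj (x i) * g i j * x j)"

definition psdf :: "nat \<Rightarrow> (nat \<Rightarrow> nat \<Rightarrow> complex) \<Rightarrow> bool" where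
  "psdf n g \<longleftrightarrow> (\<forall>i<n. \<forall>j<n. g j i = cnj (g i j)) \<and> (\<forall>x. 0 \<le> Re (qf n g x))"

lemma qf_Suc: "qf (Suc n) g x = qf n g x + (\<Sum>i<n. cnj (x i) * g i n * x n) + (\<Sum>j<n. cnj (x n) * g n j * x j)
   + cnj (x n) * g n n * x n"
  unfolding qf_def by (simp add: sum.distrib algebra_simps)

lemma qf_restrict: "qf (Suc n) g (\<lambda>i. if i < n then x i else 0) = qf n g x"
  unfolding qf_Suc by (simp add: qf_def)

lemma psdf_herm: "psdf n g \<Longrightarrow> i < n \<Longrightarrow> j < n \<Longrightarrow> g j i = cnj (g i j)"
  unfolding psdf_def by blast
lemma psdf_nonneg: "psdf n g \<Longrightarrow> 0 \<le> Re (qf n g x)"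
  unfolding psdf_def by blast

lemma psdf_row_zero:
  assumes p: "psdf (Suc n) g" and d: "g n n = 0" and i: "i < n"
  shows "g i n = 0"
proof (rule ccontr)
  assume b0: "g i n \<noteq> 0"
  let ?b = "g i n"
  have h: "g n i = cnj ?b" using psdf_herm[OF p, of i n] i by simp
  define c where "c = Re (g i i)"
  have gii: "g i i = complex_of_real c"
  proof -
    have "g i i = cnj (g i i)" using psdf_herm[OF p, of i i] i by simp
    then show ?thesis unfolding c_def by (metis Reals_cnj_iff complex_is_Real_iff of_real_Re)
  qed
  define s where "s = 1 / (\<bar>c\<bar> + 1)"
  have s: "s > 0" "s * c < 1" unfolding s_def by (auto simp: field_simps)
  define x where "x = (\<lambda>j. if j = i then - complex_of_real s * ?b else if j = n then 1 else 0)"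
  have xz: "\<And>a. a \<notin> {i,n} \<Longrightarrow> x a = 0" by (auto simp: x_def)
  have "qf (Suc n) g x = (\<Sum>a\<in>{i,n}. \<Sum>b\<in>{i,n}. cnj (x a) * g a b * x b)"
    unfolding qf_def
  proof (rule sum.mono_neutral_cong_right)
    show "{i,n} \<subseteq> {..<Suc n}" using i by auto
    show "\<forall>a\<in>{..<Suc n} - {i, n}. (\<Sum>j<Suc n. cnj (x a) * g a j * x j) = 0" using xz by simp
    fix a assume "a \<in> {i,n}"
    show "(\<Sum>j<Suc n. cnj (x a) * g a j * x j) = (\<Sum>b\<in>{i,n}. cnj (x a) * g a b * x b)"
      by (rule sum.mono_neutral_cong_right) (use i xz in auto)
  qed simp
  also have "\<dots> = complex_of_real s * complex_of_real s * complex_of_real c * (?b * cnj ?b) - 2 * complex_of_real s * (?b * cnj ?b)"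
    using i d h gii by (simp add: x_def algebra_simps)
  also have "?b * cnj ?b = complex_of_real ((cmod ?b)^2)" by (simp add: complex_norm_square[symmetric])
  finally have qv: "qf (Suc n) g x = complex_of_real (s * s * c * (cmod ?b)^2 - 2 * s * (cmod ?b)^2)" by simp
  have "Re (qf (Suc n) g x) = s * (cmod ?b)^2 * (s * c - 2)" unfolding qv by (simp add: algebra_simps)
  also have "\<dots> < 0" using s b0 by (intro mult_pos_neg) auto
  finally show False using psdf_nonneg[OF p, of x] by simp
qed

lemma sum_list_zero_map[simp]: "(\<Sum>x\<leftarrow>us. (0::complex)) = 0" by (induct us) auto

lemma qf_unit: "qf (Suc n) g (\<lambda>i. if i = n then 1 else 0) = g n n"
  unfolding qf_Suc by (simp add: qf_def)

lemma psdf_decomp: "psdf n g \<Longrightarrow> \<exists>us. \<forall>i<n. \<forall>j<n. g i j = (\<Sum>u\<leftarrow>us. u i * cnj (u j))"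
proof (induction n arbitrary: g)
  case 0 show ?case by auto
next
  case (Suc n)
  note p = Suc.prems
  define d where "d = Re (g n n)"
  have gnn: "g n n = complex_of_real d"
  proof -
    have "g n n = cnj (g n n)" using psdf_herm[OF p, of n n] by simp
    then show ?thesis unfolding d_def by (metis Reals_cnj_iff complex_is_Real_iff of_real_Re)
  qed
  have d0: "d \<ge> 0" using psdf_nonneg[OF p, of "\<lambda>i. if i = n then 1 else 0"] unfolding qf_unit d_def .
  have herm: "\<And>i j. i < Suc n \<Longrightarrow> j < Suc n \<Longrightarrow> g j i = cnj (g i j)" using psdf_herm[OF p] by blast
  show ?case
  proof (cases "d = 0")
    case True
    have r0: "g i n = 0" if "i < n" for i using psdf_row_zero[OF p _ that] gnn True by simp
    have c0: "g n i = 0" if "i < n" for i using r0[OF that] herm[of i n] that by simp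
    have "psdf n g" unfolding psdf_def
    proof (intro conjI allI impI)
      fix i j assume "i < n" "j < n" then show "g j i = cnj (g i j)" using herm[of i j] by simp
    next
      fix x show "0 \<le> Re (qf n g x)" using psdf_nonneg[OF p, of "\<lambda>i. if i < n then x i else 0"] qf_restrict by simp
    qed
    from Suc.IH[OF this] obtain us where us: "\<forall>i<n. \<forall>j<n. g i j = (\<Sum>u\<leftarrow>us. u i * cnj (u j))" by blast
    define us' where "us' = map (\<lambda>u i. if i < n then u i else 0) us"
    show ?thesis
    proof (intro exI allI impI)
      fix i j assume i: "i < Suc n" and j: "j < Suc n"
      show "g i j = (\<Sum>u\<leftarrow>us'. u i * cnj (u j))"
      proof (cases "i < n \<and> j < n")
        case True then show ?thesis using us by (simp add: us'_def o_def)
      next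
        case False
        then have "g i j = 0" using i j r0 c0 gnn \<open>d = 0\<close> by (cases "i = n"; cases "j = n") auto
        then show ?thesis using False by (cases "i < n") (simp_all add: us'_def o_def)
      qed
    qed
  next
    case False
    then have dpos: "d > 0" using d0 by simp
    define u0 where "u0 = (\<lambda>i. g i n / complex_of_real (sqrt d))"
    define h where "h = (\<lambda>i j. g i j - u0 i * cnj (u0 j))"
    have sq: "complex_of_real (sqrt d) * complex_of_real (sqrt d) = complex_of_real d"
    proof -
      have "sqrt d * sqrt d = d" using d0 by simp
      then show ?thesis by (metis of_real_mult)
    qed
    have u0u0: "u0 i * cnj (u0 j) = g i n * g n j / complex_of_real d" if "j < Suc n" for i j
      using herm[of n j] that sq unfolding u0_def by (simp add: field_simps)
    have hij: "h i j = g i j - g i n * g n j / complex_of_real d" if "j < Suc n" for i j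
      unfolding h_def using u0u0[OF that] by simp
    have "psdf n h" unfolding psdf_def
    proof (intro conjI allI impI)
      fix i j assume "i < n" "j < n" then show "h j i = cnj (h i j)" 
        unfolding h_def using herm[of i j] by simp
    next
      fix x
      define s where "s = (\<Sum>j<n. g n j * x j)"
      define y where "y = (\<lambda>i. if i < n then x i else if i = n then - s / complex_of_real d else 0)"
      have cs: "(\<Sum>i<n. cnj (x i) * g i n) = cnj s" unfolding s_def
        by (simp add: cnj_sum herm[of n] mult.commute)
      have "qf (Suc n) g y = qf n g x + (\<Sum>i<n. cnj (x i) * g i n) * y n + cnj (y n) * s + cnj (y n) * g n n * y n"
        unfolding qf_Suc s_def
        by (simp add: y_def qf_def sum_distrib_left sum_distrib_right mult.assoc sum_negf sum_divide_distrib)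
      also have "\<dots> = qf n g x - cnj s * s / complex_of_real d"
        unfolding cs gnn using dpos by (simp add: y_def field_simps)
      also have "qf n g x - cnj s * s / complex_of_real d = qf n h x"
      proof -
        have "qf n h x = (\<Sum>i<n. \<Sum>j<n. cnj (x i) * g i j * x j - cnj (x i) * g i n * (g n j * x j) / complex_of_real d)"
          unfolding qf_def by (intro sum.cong refl) (simp add: hij algebra_simps diff_divide_distrib)
        also have "\<dots> = qf n g x - (\<Sum>i<n. \<Sum>j<n. cnj (x i) * g i n * (g n j * x j)) / complex_of_real d"
          by (simp add: qf_def sum_subtractf sum_divide_distrib)
        also have "(\<Sum>i<n. \<Sum>j<n. cnj (x i) * g i n * (g n j * x j)) = (\<Sum>i<n. cnj (x i) * g i n) * s"
          unfolding s_def by (simp add: sum_product)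
        also have "\<dots> = cnj s * s" using cs by simp
        finally show ?thesis by simp
      qed
      finally show "0 \<le> Re (qf n h x)" using psdf_nonneg[OF p, of y] by simp
    qed
    from Suc.IH[OF this] obtain us where us: "\<forall>i<n. \<forall>j<n. h i j = (\<Sum>u\<leftarrow>us. u i * cnj (u j))" by blast
    define us' where "us' = u0 # map (\<lambda>u i. if i < n then u i else 0) us"
    show ?thesis
    proof (intro exI allI impI)
      fix i j assume i: "i < Suc n" and j: "j < Suc n"
      have gh: "g i j = u0 i * cnj (u0 j) + h i j" unfolding h_def by simp
      show "g i j = (\<Sum>u\<leftarrow>us'. u i * cnj (u j))"
      proof (cases "i < n \<and> j < n")
        case True then show ?thesis using us gh by (simp add: us'_def o_def)
      next
        case False
        then have "h i j = 0" using i j hij gnn dpos by (cases "i = n"; cases "j = n") auto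
        then show ?thesis using False gh by (cases "i < n") (simp_all add: us'_def o_def)
      qed
    qed
  qed
qed


lemma sum_shift0: "sum f {m..<m+n} = (\<Sum>i<n. f (m+i::nat))"
  by (induct n) auto

lemma sum_block: "(\<Sum>a<k*(n::nat). f a) = (\<Sum>p<k. \<Sum>i<n. f (p*n+i))"
proof -
  have "(\<Sum>a<k*n. f a) = (\<Sum>m<k. sum f {m*n..<m*n+n})" using sum.nat_group[where g=f and k=n and n=k] by simp
  then show ?thesis by (simp add: sum_shift0)
qed

lemma sum_list_Re_nonneg: "(\<And>u. u \<in> set us \<Longrightarrow> 0 \<le> Re (f u)) \<Longrightarrow> 0 \<le> Re (\<Sum>u\<leftarrow>us. f u)"
  by (induct us) auto

lemma kron_single: "(\<Sum>p<k. \<Sum>i<n. \<Sum>q<k. \<Sum>j<n. cnj (v p i) * A p q * (u i * cnj (u j)) * v q j)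
   = qf k A (\<lambda>p. \<Sum>j<n. cnj (u j) * v p j)"
proof -
  have "(\<Sum>p<k. \<Sum>i<n. \<Sum>q<k. \<Sum>j<n. cnj (v p i) * A p q * (u i * cnj (u j)) * v q j)
     = (\<Sum>p<k. \<Sum>q<k. \<Sum>i<n. \<Sum>j<n. cnj (v p i) * A p q * (u i * cnj (u j)) * v q j)"
    by (intro sum.cong refl, rule sum.swap)
  also have "\<dots> = (\<Sum>p<k. \<Sum>q<k. (\<Sum>i<n. u i * cnj (v p i)) * A p q * (\<Sum>j<n. cnj (u j) * v q j))"
    by (intro sum.cong refl) (simp add: sum_product sum_distrib_left sum_distrib_right algebra_simps)
  also have "\<dots> = qf k A (\<lambda>p. \<Sum>j<n. cnj (u j) * v p j)"
    unfolding qf_def by (simp add: cnj_sum mult.commute)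
  finally show ?thesis .
qed

lemma kron_list: "(\<Sum>p<k. \<Sum>i<n. \<Sum>q<k. \<Sum>j<n. cnj (v p i) * A p q * (\<Sum>u\<leftarrow>us. u i * cnj (u j)) * v q j)
   = (\<Sum>u\<leftarrow>us. qf k A (\<lambda>p. \<Sum>j<n. cnj (u j) * v p j))"
proof (induct us)
  case Nil then show ?case by simp
next
  case (Cons u us)
  have "(\<Sum>p<k. \<Sum>i<n. \<Sum>q<k. \<Sum>j<n. cnj (v p i) * A p q * (\<Sum>w\<leftarrow>u#us. w i * cnj (w j)) * v q j)
     = (\<Sum>p<k. \<Sum>i<n. \<Sum>q<k. \<Sum>j<n. cnj (v p i) * A p q * (u i * cnj (u j)) * v q j)
     + (\<Sum>p<k. \<Sum>i<n. \<Sum>q<k. \<Sum>j<n. cnj (v p i) * A p q * (\<Sum>w\<leftarrow>us. w i * cnj (w j)) * v q j)"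
  proof -
    have e: "\<And>p i q j. cnj (v p i) * A p q * (\<Sum>w\<leftarrow>u#us. w i * cnj (w j)) * v q j
       = cnj (v p i) * A p q * (u i * cnj (u j)) * v q j + cnj (v p i) * A p q * (\<Sum>w\<leftarrow>us. w i * cnj (w j)) * v q j"
      by (simp add: distrib_left distrib_right)
    show ?thesis unfolding e by (simp only: sum.distrib)
  qed
  then show ?case using Cons kron_single by simp
qed

lemma kron_nonneg: assumes A: "psdf k A" and g: "psdf n g"
  shows "0 \<le> Re (\<Sum>p<k. \<Sum>i<n. \<Sum>q<k. \<Sum>j<n. cnj (v p i) * A p q * g i j * v q j)"
proof -
  from psdf_decomp[OF g] obtain us where us: "\<forall>i<n. \<forall>j<n. g i j = (\<Sum>u\<leftarrow>us. u i * cnj (u j))" by blast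
  have "(\<Sum>p<k. \<Sum>i<n. \<Sum>q<k. \<Sum>j<n. cnj (v p i) * A p q * g i j * v q j)
     = (\<Sum>p<k. \<Sum>i<n. \<Sum>q<k. \<Sum>j<n. cnj (v p i) * A p q * (\<Sum>u\<leftarrow>us. u i * cnj (u j)) * v q j)"
    using us by (intro sum.cong refl) simp
  also have "\<dots> = (\<Sum>u\<leftarrow>us. qf k A (\<lambda>p. \<Sum>j<n. cnj (u j) * v p j))" by (rule kron_list)
  finally show ?thesis using psdf_nonneg[OF A] by (simp add: sum_list_Re_nonneg)
qed


lemma quad_form: assumes A: "A \<in> carrier_mat m m" and z: "z \<in> carrier_vec m"
  shows "conjugate z \<bullet> (A *\<^sub>v z) = (\<Sum>i<m. \<Sum>j<m. cnj (z$i) * A$$(i,j) * z$j)"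
  using A z by (simp add: scalar_prod_def sum_distrib_left atLeast0LessThan mult.assoc)

lemma psd_psdf: assumes "psd_mat n G" shows "psdf n (\<lambda>i j. G$$(i,j))"
  unfolding psdf_def
proof (intro conjI allI impI)
  have G: "G \<in> carrier_mat n n" and adj: "mat_adjoint G = G" using assms unfolding psd_mat_def by auto
  fix i j assume i: "i < n" and j: "j < n"
  have "G $$ (j,i) = mat_adjoint G $$ (j,i)" using adj by simp
  also have "\<dots> = cnj (G $$ (i,j))" using G i j by simp
  finally show "G $$ (j,i) = cnj (G $$ (i,j))" .
next
  have G: "G \<in> carrier_mat n n" using assms unfolding psd_mat_def by auto
  fix x
  have "0 \<le> Re (conjugate (vec n x) \<bullet> (G *\<^sub>v vec n x))" using assms unfolding psd_mat_def by auto
  also have "conjugate (vec n x) \<bullet> (G *\<^sub>v vec n x) = qf n (\<lambda>i j. G$$(i,j)) x"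
    unfolding quad_form[OF G vec_carrier] qf_def by (intro sum.cong refl) auto
  finally show "0 \<le> Re (qf n (\<lambda>i j. G$$(i,j)) x)" .
qed

lemma psdf_sub2: assumes p: "psdf (k*2) g" and r: "r < 2"
  shows "psdf k (\<lambda>p q. g (p*2+r) (q*2+r))"
  unfolding psdf_def
proof (intro conjI allI impI)
  fix i j assume "i < k" "j < k"
  then show "g (j*2+r) (i*2+r) = cnj (g (i*2+r) (j*2+r))" using r by (intro psdf_herm[OF p]) auto
next
  fix w
  define z where "z = (\<lambda>a. if a mod 2 = r then w (a div 2) else (0::complex))"
  have "qf (k*2) g z = (\<Sum>p<k. \<Sum>s<2. \<Sum>q<k. \<Sum>t<2. cnj (z (p*2+s)) * g (p*2+s) (q*2+t) * z (q*2+t))"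
    unfolding qf_def sum_block by simp
  also have "\<dots> = (\<Sum>p<k. \<Sum>s<2. \<Sum>q<k. \<Sum>t<2. cnj (if s = r then w p else 0) * g (p*2+s) (q*2+t) * (if t = r then w q else 0))"
    by (intro sum.cong refl) (simp add: z_def)
  also have "\<dots> = qf k (\<lambda>p q. g (p*2+r) (q*2+r)) w"
    unfolding qf_def using r by (cases r) (simp_all add: numeral_2_eq_2 lessThan_Suc less_Suc_eq)
  finally show "0 \<le> Re (qf k (\<lambda>p q. g (p*2+r) (q*2+r)) w)" using psdf_nonneg[OF p, of z] by simp
qed


definition mp :: "complex mat \<Rightarrow> complex mat \<Rightarrow> complex mat \<Rightarrow> complex mat" where
  "mp \<gamma> \<omega> Y = Y$$(0,0) \<cdot>\<^sub>m \<gamma> + Y$$(1,1) \<cdot>\<^sub>m \<omega>"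

lemma mp_entry: assumes g: "\<gamma> \<in> carrier_mat n n" and w: "\<omega> \<in> carrier_mat n n"
  and a: "a < k*n" and b: "b < k*n"
  shows "id_tensor n k (mp \<gamma> \<omega>) X $$ (a,b) = X$$(2*(a div n), 2*(b div n)) * \<gamma>$$(a mod n, b mod n)
     + X$$(2*(a div n)+1, 2*(b div n)+1) * \<omega>$$(a mod n, b mod n)"
proof -
  have n: "n > 0" using a by (cases n) auto
  then show ?thesis using a b g w unfolding id_tensor_def mp_def by simp
qed

lemma block_bound: assumes "p < k" "i < n" shows "p*n+i < k*(n::nat)"
proof -
  have "p*n + i < p*n + n" using assms by simp
  also have "\<dots> = Suc p * n" by simp
  also have "\<dots> \<le> k*n" using assms by (intro mult_le_mono1) simp
  finally show ?thesis .
qed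

lemma div_bound: assumes "a < k*(n::nat)" shows "a div n < k"
proof -
  have n: "n > 0" using assms by (cases n) auto
  then show ?thesis using assms by (simp add: div_less_iff_less_mult)
qed

lemma mp_CP: assumes g: "psd_mat n \<gamma>" and w: "psd_mat n \<omega>" and X: "psd_mat (2*k) X"
  shows "psd_mat (k*n) (id_tensor n k (mp \<gamma> \<omega>) X)"
proof -
  let ?M = "id_tensor n k (mp \<gamma> \<omega>) X"
  have gc: "\<gamma> \<in> carrier_mat n n" and wc: "\<omega> \<in> carrier_mat n n" using g w unfolding psd_mat_def by auto
  have Mc: "?M \<in> carrier_mat (k*n) (k*n)" unfolding id_tensor_def by simp
  have pX: "psdf (k*2) (\<lambda>i j. X$$(i,j))" using psd_psdf[OF X] by (simp add: mult.commute)
  have pg: "psdf n (\<lambda>i j. \<gamma>$$(i,j))" by (rule psd_psdf[OF g])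
  have pw: "psdf n (\<lambda>i j. \<omega>$$(i,j))" by (rule psd_psdf[OF w])
  have pA: "psdf k (\<lambda>p q. X$$(p*2+0, q*2+0))" by (rule psdf_sub2[OF pX]) simp
  have pB: "psdf k (\<lambda>p q. X$$(p*2+1, q*2+1))" by (rule psdf_sub2[OF pX]) simp
  have divk: "a div n < k" if "a < k*n" for a using that by (rule div_bound)
  have adj: "mat_adjoint ?M = ?M"
  proof (rule eq_matI)
    fix a b assume a: "a < dim_row ?M" and b: "b < dim_col ?M"
    then have a': "a < k*n" and b': "b < k*n" using Mc by auto
    have n: "n > 0" using a' by (cases n) auto
    have "mat_adjoint ?M $$ (a,b) = cnj (?M $$ (b,a))" using a b Mc by simp
    also have "\<dots> = ?M $$ (a,b)"
      unfolding mp_entry[OF gc wc a' b'] mp_entry[OF gc wc b' a']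
      using psdf_herm[OF pX, of "2*(a div n)" "2*(b div n)"] psdf_herm[OF pX, of "2*(a div n)+1" "2*(b div n)+1"]
        psdf_herm[OF pg, of "a mod n" "b mod n"] psdf_herm[OF pw, of "a mod n" "b mod n"]
        divk[OF a'] divk[OF b'] n by simp
    finally show "mat_adjoint ?M $$ (a,b) = ?M $$ (a,b)" .
  qed (use Mc in auto)
  show ?thesis unfolding psd_mat_def
  proof (intro conjI ballI Mc adj)
    fix z :: "complex vec" assume z: "z \<in> carrier_vec (k*n)"
    define v where "v = (\<lambda>p i. z$(p*n+i))"
    have "conjugate z \<bullet> (?M *\<^sub>v z) = (\<Sum>a<k*n. \<Sum>b<k*n. cnj (z$a) * ?M$$(a,b) * z$b)"
      by (rule quad_form[OF Mc z])
    also have "\<dots> = (\<Sum>p<k. \<Sum>i<n. \<Sum>q<k. \<Sum>j<n. cnj (z$(p*n+i)) * ?M$$(p*n+i,q*n+j) * z$(q*n+j))"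
      unfolding sum_block by simp
    also have "\<dots> = (\<Sum>p<k. \<Sum>i<n. \<Sum>q<k. \<Sum>j<n. cnj (v p i) * X$$(p*2+0, q*2+0) * \<gamma>$$(i,j) * v q j)
       + (\<Sum>p<k. \<Sum>i<n. \<Sum>q<k. \<Sum>j<n. cnj (v p i) * X$$(p*2+1, q*2+1) * \<omega>$$(i,j) * v q j)"
    proof -
      have "cnj (z$(p*n+i)) * ?M$$(p*n+i,q*n+j) * z$(q*n+j) = 
         cnj (v p i) * X$$(p*2+0, q*2+0) * \<gamma>$$(i,j) * v q j + cnj (v p i) * X$$(p*2+1, q*2+1) * \<omega>$$(i,j) * v q j"
        if "p < k" "i < n" "q < k" "j < n" for p i q j
      proof -
        have a: "p*n+i < k*n" and b: "q*n+j < k*n" using that by (auto intro: block_bound)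
        show ?thesis unfolding mp_entry[OF gc wc a b] using that
          by (simp add: v_def algebra_simps)
      qed
      then show ?thesis by (simp add: sum.distrib)
    qed
    finally show "0 \<le> Re (conjugate z \<bullet> (?M *\<^sub>v z))"
      using kron_nonneg[OF pA pg, of v] kron_nonneg[OF pB pw, of v] by simp
  qed
qed


lemma mtrace_mp: assumes X: "X \<in> carrier_mat 2 2" and g: "\<gamma> \<in> carrier_mat n n" and w: "\<omega> \<in> carrier_mat n n"
  shows "mtrace (mp \<gamma> \<omega> X) = X$$(0,0) * mtrace \<gamma> + X$$(1,1) * mtrace \<omega>"
  using g w unfolding mtrace_def mp_def by (simp add: sum.distrib sum_distrib_left)

lemma mtrace_2: "X \<in> carrier_mat 2 2 \<Longrightarrow> mtrace X = X$$(0,0) + X$$(1,1)"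
  unfolding mtrace_def by (simp add: numeral_2_eq_2)

lemma mp_CPTP: assumes g: "\<gamma> \<in> density_ops n" and w: "\<omega> \<in> density_ops n"
  shows "CPTP_B n (mp \<gamma> \<omega>)"
proof -
  have gp: "psd_mat n \<gamma>" and gt: "mtrace \<gamma> = 1" and wp: "psd_mat n \<omega>" and wt: "mtrace \<omega> = 1"
    using g w unfolding density_ops_def by auto
  have gc: "\<gamma> \<in> carrier_mat n n" and wc: "\<omega> \<in> carrier_mat n n" using gp wp unfolding psd_mat_def by auto
  show ?thesis unfolding CPTP_B_def
  proof (intro conjI ballI allI impI)
    fix X :: "complex mat" assume "X \<in> carrier_mat 2 2"
    then show "mp \<gamma> \<omega> X \<in> carrier_mat n n" unfolding mp_def using gc wc by simp
  next
    fix X Y :: "complex mat" and a b :: complex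
    assume X: "X \<in> carrier_mat 2 2" and Y: "Y \<in> carrier_mat 2 2"
    show "mp \<gamma> \<omega> (a \<cdot>\<^sub>m X + b \<cdot>\<^sub>m Y) = a \<cdot>\<^sub>m mp \<gamma> \<omega> X + b \<cdot>\<^sub>m mp \<gamma> \<omega> Y"
      unfolding mp_def using X Y gc wc by (intro eq_matI) (auto simp: algebra_simps)
  next
    fix X :: "complex mat" assume X: "X \<in> carrier_mat 2 2"
    show "mtrace (mp \<gamma> \<omega> X) = mtrace X" unfolding mtrace_mp[OF X gc wc] mtrace_2[OF X] gt wt by simp
  next
    fix k X assume "psd_mat (2*k) X"
    then show "psd_mat (k*n) (id_tensor n k (mp \<gamma> \<omega>) X)" by (rule mp_CP[OF gp wp])
  qed
qed


definition segl :: "complex mat \<Rightarrow> complex mat \<Rightarrow> real \<Rightarrow> complex mat" where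
  "segl \<gamma> \<omega> l = complex_of_real (1 - l) \<cdot>\<^sub>m \<gamma> + complex_of_real l \<cdot>\<^sub>m \<omega>"

lemma segment_C_segl: "segment_C \<gamma> \<omega> t = {segl \<gamma> \<omega> l | l. 0 < l \<and> l \<le> t}"
  unfolding segment_C_def segl_def by simp

lemma real_lim_aux: fixes a b t :: real
  assumes t: "t > 0" and b: "b \<ge> 0" and h: "\<And>l. 0 < l \<Longrightarrow> l \<le> t \<Longrightarrow> 0 \<le> (1 - l) * a + l * b"
  shows "a \<ge> 0"
proof (rule ccontr)
  assume "\<not> a \<ge> 0" then have a: "a < 0" by simp
  define l where "l = min t (- a / (2 * (b - a)))"
  have ba: "b - a > 0" using a b by simp
  have "- a / (2 * (b - a)) > 0" using a ba by (intro divide_pos_pos) auto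
  then have l0: "l > 0" unfolding l_def using t by simp
  have lt: "l \<le> t" unfolding l_def by simp
  have "l * (b - a) \<le> (- a / (2 * (b - a))) * (b - a)" unfolding l_def using ba
    by (intro mult_right_mono) auto
  also have "\<dots> = - a / 2" using ba by (simp add: field_simps)
  finally have "(1 - l) * a + l * b \<le> a / 2" by (simp add: algebra_simps)
  then show False using h[OF l0 lt] a by simp
qed

lemma segl_entry: "\<gamma> \<in> carrier_mat n n \<Longrightarrow> \<omega> \<in> carrier_mat n n \<Longrightarrow> i < n \<Longrightarrow> j < n \<Longrightarrow>
  segl \<gamma> \<omega> l $$ (i,j) = complex_of_real (1 - l) * \<gamma>$$(i,j) + complex_of_real l * \<omega>$$(i,j)"
  unfolding segl_def by simp

lemma segl_carrier: "\<gamma> \<in> carrier_mat n n \<Longrightarrow> \<omega> \<in> carrier_mat n n \<Longrightarrow> segl \<gamma> \<omega> l \<in> carrier_mat n n"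
  unfolding segl_def by simp

lemma gamma_density:
  assumes gc: "\<gamma> \<in> carrier_mat n n" and w: "\<omega> \<in> density_ops n" and t: "t > 0"
    and seg: "\<And>l. 0 < l \<Longrightarrow> l \<le> t \<Longrightarrow> segl \<gamma> \<omega> l \<in> density_ops n"
  shows "\<gamma> \<in> density_ops n"
proof -
  have wp: "psd_mat n \<omega>" and wt: "mtrace \<omega> = 1" using w unfolding density_ops_def by auto
  have wc: "\<omega> \<in> carrier_mat n n" using wp unfolding psd_mat_def by auto
  let ?r1 = "segl \<gamma> \<omega> t" and ?r2 = "segl \<gamma> \<omega> (t/2)"
  have r1: "psd_mat n ?r1" "mtrace ?r1 = 1" using seg[of t] t unfolding density_ops_def by auto
  have r2: "psd_mat n ?r2" "mtrace ?r2 = 1" using seg[of "t/2"] t unfolding density_ops_def by auto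
  have ent: "\<gamma>$$(i,j) = 2 * ?r2 $$ (i,j) - ?r1 $$ (i,j)" if "i < n" "j < n" for i j
    unfolding segl_entry[OF gc wc that] by (simp add: algebra_simps)
  have adj: "mat_adjoint \<gamma> = \<gamma>"
  proof (rule eq_matI)
    fix i j assume i: "i < dim_row \<gamma>" and j: "j < dim_col \<gamma>"
    then have i': "i < n" and j': "j < n" using gc by auto
    have "mat_adjoint \<gamma> $$ (i,j) = cnj (\<gamma> $$ (j,i))" using i j gc by simp
    also have "\<dots> = \<gamma> $$ (i,j)" unfolding ent[OF i' j'] ent[OF j' i']
      using psdf_herm[OF psd_psdf[OF r1(1)], of i j] psdf_herm[OF psd_psdf[OF r2(1)], of i j] i' j' by simp
    finally show "mat_adjoint \<gamma> $$ (i,j) = \<gamma> $$ (i,j)" .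
  qed (use gc in auto)
  have tr: "mtrace \<gamma> = 1"
  proof -
    have "mtrace \<gamma> = 2 * mtrace ?r2 - mtrace ?r1"
      unfolding mtrace_def using gc segl_carrier[OF gc wc, THEN carrier_matD(1)] ent
      by (simp add: sum_subtractf sum_distrib_left)
    then show ?thesis using r1 r2 by simp
  qed
  have psd: "0 \<le> Re (conjugate v \<bullet> (\<gamma> *\<^sub>v v))" if v: "v \<in> carrier_vec n" for v
  proof -
    define Q where "Q = (\<lambda>A. \<Sum>i<n. \<Sum>j<n. cnj (v$i) * A$$(i,j) * v$j)"
    have QS: "Q (segl \<gamma> \<omega> l) = complex_of_real (1 - l) * Q \<gamma> + complex_of_real l * Q \<omega>" for l
    proof -
      have "Q (segl \<gamma> \<omega> l) = (\<Sum>i<n. \<Sum>j<n. complex_of_real (1 - l) * (cnj (v$i) * \<gamma>$$(i,j) * v$j)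
         + complex_of_real l * (cnj (v$i) * \<omega>$$(i,j) * v$j))"
        unfolding Q_def by (intro sum.cong refl) (simp add: segl_entry[OF gc wc] algebra_simps)
      also have "\<dots> = complex_of_real (1 - l) * Q \<gamma> + complex_of_real l * Q \<omega>"
        unfolding Q_def by (simp add: sum.distrib sum_distrib_left)
      finally show ?thesis .
    qed
    have qw: "0 \<le> Re (Q \<omega>)"
    proof -
      have "0 \<le> Re (conjugate v \<bullet> (\<omega> *\<^sub>v v))" using wp v unfolding psd_mat_def by auto
      then show ?thesis by (simp only: quad_form[OF wc v] Q_def)
    qed
    have "0 \<le> Re (Q \<gamma>)"
    proof (rule real_lim_aux[OF t qw])
      fix l assume l: "0 < l" "l \<le> t"
      have "0 \<le> Re (conjugate v \<bullet> (segl \<gamma> \<omega> l *\<^sub>v v))"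
        using seg[OF l] v unfolding density_ops_def psd_mat_def by auto
      then have "0 \<le> Re (Q (segl \<gamma> \<omega> l))" by (simp only: quad_form[OF segl_carrier[OF gc wc] v] Q_def)
      then show "0 \<le> (1 - l) * Re (Q \<gamma>) + l * Re (Q \<omega>)" unfolding QS by simp
    qed
    then show ?thesis unfolding quad_form[OF gc v] Q_def .
  qed
  show ?thesis unfolding density_ops_def psd_mat_def using gc adj tr psd by auto
qed


lemma dir2: assumes E: "\<E> \<subseteq> density_ops n" and M: "M > 1" and g: "\<gamma> \<in> mat_closure n \<E>"
  and w: "\<omega> \<in> eps_ball n \<epsilon> \<P>" and seg: "segment_C \<gamma> \<omega> (1/M) \<subseteq> \<E>"
  shows "\<exists>F. CPTP_B n F \<and> (\<exists>\<rho> \<in> \<P>. trace_dist (F ket1_proj) \<rho> \<le> \<epsilon>) \<and> (\<forall>\<sigma> \<in> Pi_M M. F \<sigma> \<in> \<E>)"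
proof -
  have gc: "\<gamma> \<in> carrier_mat n n" using g unfolding mat_closure_def by auto
  have wd: "\<omega> \<in> density_ops n" and "\<exists>\<rho> \<in> \<P>. trace_dist \<omega> \<rho> \<le> \<epsilon>" using w unfolding eps_ball_def by auto
  then obtain \<rho> where rho: "\<rho> \<in> \<P>" "trace_dist \<omega> \<rho> \<le> \<epsilon>" by blast
  have wc: "\<omega> \<in> carrier_mat n n" using wd unfolding density_ops_def psd_mat_def by auto
  have segin: "segl \<gamma> \<omega> l \<in> \<E>" if "0 < l" "l \<le> 1/M" for l
    using seg that unfolding segment_C_segl by blast
  have gd: "\<gamma> \<in> density_ops n"
    by (rule gamma_density[OF gc wd, of "1/M"]) (use M segin E in auto)
  have k1: "mp \<gamma> \<omega> ket1_proj = \<omega>"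
    unfolding mp_def ket1_proj_def using wc gc by (intro eq_matI) auto
  have pis: "mp \<gamma> \<omega> \<sigma> \<in> \<E>" if "\<sigma> \<in> Pi_M M" for \<sigma>
  proof -
    from that obtain M' where M': "M' \<ge> M" "\<sigma> = pi_M M'" unfolding Pi_M_def by blast
    have "mp \<gamma> \<omega> (pi_M M') = segl \<gamma> \<omega> (1/M')" unfolding mp_def pi_M_def segl_def by simp
    moreover have "0 < 1/M'" "1/M' \<le> 1/M" using M M' by (auto simp: field_simps)
    ultimately show ?thesis using segin M' by simp
  qed
  show ?thesis using mp_CPTP[OF gd wd] k1 rho pis by (intro exI[of _ "mp \<gamma> \<omega>"]) auto
qed

lemma mat22_id: "X \<in> carrier_mat 2 2 \<Longrightarrow> mat 2 2 (\<lambda>p. X$$p) = X"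
  by (intro eq_matI) auto

lemma ket1_c: "ket1_proj \<in> carrier_mat 2 2" unfolding ket1_proj_def by simp

lemma ket1_psd: "psd_mat 2 ket1_proj"
  unfolding psd_mat_def
proof (intro conjI ballI ket1_c)
  show "mat_adjoint ket1_proj = ket1_proj"
    using ket1_c by (intro eq_matI) (auto simp: ket1_proj_def numeral_2_eq_2 less_Suc_eq)
next
  fix v :: "complex vec" assume v: "v \<in> carrier_vec 2"
  have "conjugate v \<bullet> (ket1_proj *\<^sub>v v) = cnj (v$1) * v$1"
    unfolding quad_form[OF ket1_c v] by (simp add: ket1_proj_def numeral_2_eq_2)
  also have "Re \<dots> = (Re (v$1))^2 + (Im (v$1))^2" by (simp add: power2_eq_square)
  finally show "0 \<le> Re (conjugate v \<bullet> (ket1_proj *\<^sub>v v))" by simp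
qed

lemma id_tensor_1: assumes "F X \<in> carrier_mat n n" "X \<in> carrier_mat 2 2"
  shows "id_tensor n 1 F X = F X"
  using assms unfolding id_tensor_def by (intro eq_matI) (auto simp: mat22_id)


lemma dir1: assumes M: "M > 1" and F: "CPTP_B n F" and rho: "\<rho> \<in> \<P>" "trace_dist (F ket1_proj) \<rho> \<le> \<epsilon>"
  and sig: "\<forall>\<sigma> \<in> Pi_M M. F \<sigma> \<in> \<E>"
  shows "\<exists>\<gamma> \<in> mat_closure n \<E>. \<exists>\<omega> \<in> eps_ball n \<epsilon> \<P>. segment_C \<gamma> \<omega> (1/M) \<subseteq> \<E>"
proof -
  define E00 :: "complex mat" where "E00 = mat 2 2 (\<lambda>(i,j). if i = 0 \<and> j = 0 then 1 else 0)"
  have E00c: "E00 \<in> carrier_mat 2 2" unfolding E00_def by simp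
  have Fc: "\<And>X. X \<in> carrier_mat 2 2 \<Longrightarrow> F X \<in> carrier_mat n n" using F unfolding CPTP_B_def by blast
  have Flin: "\<And>X Y a b. X \<in> carrier_mat 2 2 \<Longrightarrow> Y \<in> carrier_mat 2 2 \<Longrightarrow> F (a \<cdot>\<^sub>m X + b \<cdot>\<^sub>m Y) = a \<cdot>\<^sub>m F X + b \<cdot>\<^sub>m F Y"
    using F unfolding CPTP_B_def by blast
  have Ftr: "\<And>X. X \<in> carrier_mat 2 2 \<Longrightarrow> mtrace (F X) = mtrace X" using F unfolding CPTP_B_def by blast
  have FCP: "\<And>k X. psd_mat (2 * k) X \<Longrightarrow> psd_mat (k * n) (id_tensor n k F X)" using F unfolding CPTP_B_def by blast
  define \<gamma> where "\<gamma> = F E00"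
  define \<omega> where "\<omega> = F ket1_proj"
  have gc: "\<gamma> \<in> carrier_mat n n" unfolding \<gamma>_def by (rule Fc[OF E00c])
  have wc: "\<omega> \<in> carrier_mat n n" unfolding \<omega>_def by (rule Fc[OF ket1_c])
  have Fpi: "F (pi_M M') = segl \<gamma> \<omega> (1/M')" for M'
  proof -
    have "pi_M M' = complex_of_real (1 - 1/M') \<cdot>\<^sub>m E00 + complex_of_real (1/M') \<cdot>\<^sub>m ket1_proj"
      unfolding pi_M_def E00_def ket1_proj_def by (intro eq_matI) (auto simp: numeral_2_eq_2 less_Suc_eq)
    then show ?thesis unfolding segl_def \<gamma>_def \<omega>_def using Flin[OF E00c ket1_c] by simp
  qed
  have wd: "\<omega> \<in> density_ops n"
  proof -
    have "psd_mat (1 * n) (id_tensor n 1 F ket1_proj)" using FCP[of 1 ket1_proj] ket1_psd by simp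
    then have "psd_mat n (F ket1_proj)" using id_tensor_1[where F=F and X=ket1_proj and n=n, OF Fc[OF ket1_c] ket1_c] by simp
    then have "psd_mat n \<omega>" by (simp add: \<omega>_def)
    moreover have "mtrace \<omega> = 1" using Ftr[OF ket1_c] mtrace_2[OF ket1_c] by (simp add: \<omega>_def ket1_proj_def)
    ultimately show ?thesis unfolding density_ops_def by simp
  qed
  have wb: "\<omega> \<in> eps_ball n \<epsilon> \<P>" unfolding eps_ball_def using wd rho \<omega>_def by auto
  have segE: "segment_C \<gamma> \<omega> (1/M) \<subseteq> \<E>"
  proof
    fix x assume "x \<in> segment_C \<gamma> \<omega> (1/M)"
    then obtain l where l: "0 < l" "l \<le> 1/M" "x = segl \<gamma> \<omega> l" unfolding segment_C_segl by blast
    have "1/l \<ge> M" using l M by (auto simp: field_simps)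
    then have "pi_M (1/l) \<in> Pi_M M" unfolding Pi_M_def by blast
    then have "F (pi_M (1/l)) \<in> \<E>" using sig by blast
    then show "x \<in> \<E>" unfolding Fpi using l by simp
  qed
  have gcl: "\<gamma> \<in> mat_closure n \<E>" unfolding mat_closure_def
  proof (intro CollectI conjI allI impI gc)
    fix \<delta> :: real assume d: "\<delta> > 0"
    define T where "T = trace_norm (\<gamma> - \<omega>)"
    define M' where "M' = max M ((\<bar>T\<bar>+1)/\<delta>)"
    have M'M: "M' \<ge> M" unfolding M'_def by simp
    have M'pos: "M' > 0" using M M'M by simp
    have kE: "F (pi_M M') \<in> \<E>" using sig M'M unfolding Pi_M_def by blast
    have eq: "\<gamma> - F (pi_M M') = complex_of_real (1/M') \<cdot>\<^sub>m (\<gamma> - \<omega>)"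
      unfolding Fpi segl_def using gc wc by (intro eq_matI) (auto simp: algebra_simps)
    have gw: "\<gamma> - \<omega> \<in> carrier_mat n n" using wc by (rule minus_carrier_mat)
    have "trace_norm (\<gamma> - F (pi_M M')) = (1/M') * T"
      unfolding eq T_def by (rule trace_norm_smult[OF gw]) (use M'pos in simp)
    also have "\<dots> < \<delta>"
    proof -
      have "(\<bar>T\<bar>+1)/\<delta> \<le> M'" unfolding M'_def by simp
      then have "\<bar>T\<bar> + 1 \<le> M' * \<delta>" using d by (simp add: field_simps)
      then have "T < \<delta> * M'" by (simp add: algebra_simps)
      then show ?thesis using M'pos by (simp add: field_simps)
    qed
    finally show "\<exists>\<kappa>\<in>\<E>. trace_norm (\<gamma> - \<kappa>) < \<delta>" using kE by blast
  qed
  show ?thesis using gcl wb segE by blast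
qed

theorem theorem7:
  fixes n :: nat and \<epsilon> :: real and \<P> \<E> :: "complex mat set"
  assumes "0 \<le> \<epsilon>" and "\<epsilon> < 1"
    and "\<P> \<subseteq> density_ops n" and "\<E> \<subseteq> density_ops n"
  shows "work_cost_GPO n \<epsilon> \<P> \<E> = Dmax_constr n \<E> \<epsilon> \<P> \<E>"
proof -
  have "{M. M > 1 \<and> (\<exists>F. CPTP_B n F \<and>
      (\<exists>\<rho> \<in> \<P>. trace_dist (F ket1_proj) \<rho> \<le> \<epsilon>) \<and> (\<forall>\<sigma> \<in> Pi_M M. F \<sigma> \<in> \<E>))}
    = {M. M > 1 \<and> (\<exists>\<gamma> \<in> mat_closure n \<E>. \<exists>\<omega> \<in> eps_ball n \<epsilon> \<P>.
      segment_C \<gamma> \<omega> (1 / M) \<subseteq> \<E>)}" (is "?A = ?B")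
  proof (rule Collect_cong, rule iffI)
    fix M :: real
    assume h: "M > 1 \<and> (\<exists>F. CPTP_B n F \<and> (\<exists>\<rho> \<in> \<P>. trace_dist (F ket1_proj) \<rho> \<le> \<epsilon>) \<and> (\<forall>\<sigma> \<in> Pi_M M. F \<sigma> \<in> \<E>))"
    then obtain F \<rho> where "M > 1" "CPTP_B n F" "\<rho> \<in> \<P>" "trace_dist (F ket1_proj) \<rho> \<le> \<epsilon>" "\<forall>\<sigma> \<in> Pi_M M. F \<sigma> \<in> \<E>"
      by blast
    from dir1[OF this] show "M > 1 \<and> (\<exists>\<gamma> \<in> mat_closure n \<E>. \<exists>\<omega> \<in> eps_ball n \<epsilon> \<P>. segment_C \<gamma> \<omega> (1 / M) \<subseteq> \<E>)"
      using \<open>M > 1\<close> by blast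
  next
    fix M :: real
    assume h: "M > 1 \<and> (\<exists>\<gamma> \<in> mat_closure n \<E>. \<exists>\<omega> \<in> eps_ball n \<epsilon> \<P>. segment_C \<gamma> \<omega> (1 / M) \<subseteq> \<E>)"
    then obtain \<gamma> \<omega> where "M > 1" "\<gamma> \<in> mat_closure n \<E>" "\<omega> \<in> eps_ball n \<epsilon> \<P>" "segment_C \<gamma> \<omega> (1 / M) \<subseteq> \<E>"
      by blast
    from dir2[OF assms(4) this] show "M > 1 \<and> (\<exists>F. CPTP_B n F \<and> (\<exists>\<rho> \<in> \<P>. trace_dist (F ket1_proj) \<rho> \<le> \<epsilon>) \<and> (\<forall>\<sigma> \<in> Pi_M M. F \<sigma> \<in> \<E>))"
      using \<open>M > 1\<close> by blast
  qed
  then show ?thesis unfolding work_cost_GPO_def Dmax_constr_def by simp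
qed

end
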